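(* For $k\ge1$, let $\alpha(k)$ be the smallest integer $n$ such that there is a string of length $n$ whose Manacher array (of length $2n-1$) is not the Manacher array of any string with fewer than $k$ distinct symbols. Then $\alpha(1)=1$ and $\alpha(k)=2^{k-2}+1$ for all $k\ge2$. Equivalently, for $n\ge2$, every Manacher array of a string of length $n$ is realized by a string with at most $\lfloor\log_2(n-1)\rfloor+2$ distinct symbols, and this bound is attained for every such $n$.
   Context: The Manacher array of a string $S$ of length $n$ is the array $\mathsf A[1..2n-1]$: $\mathsf A[2k-1]$ is the largest $r\ge0$ with $1\le k-r$, $k+r\le n$ and $S[k-r..k+r]$ a palindrome; $\mathsf A[2k]$ is the largest $r\ge0$ with $1\le k-r+1$, $k+r\le n$ and $S[k-r+1..k+r]$ a palindrome. *)

theory Defs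
  imports Complex_Main
begin

text \<open>Strings are lists; positions are 1-indexed as in the paper: S[i] = S ! (i-1).
  pal_sub S i j: the factor S[i..j] (inclusive; empty if j < i) is a palindrome.\<close>
definition pal_sub :: "'a list \<Rightarrow> nat \<Rightarrow> nat \<Rightarrow> bool" where
  "pal_sub S i j = (let w = take (j + 1 - i) (drop (i - 1) S) in rev w = w)"

text \<open>A[2k-1]: largest r with 1 \<le> k-r, k+r \<le> n, S[k-r..k+r] palindrome.\<close>
definition man_odd :: "'a list \<Rightarrow> nat \<Rightarrow> nat" where
  "man_odd S k = (GREATEST r. r + 1 \<le> k \<and> k + r \<le> length S \<and> pal_sub S (k - r) (k + r))"

text \<open>A[2k]: largest r with 1 \<le> k-r+1, k+r \<le> n, S[k-r+1..k+r] palindrome.\<close>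
definition man_even :: "'a list \<Rightarrow> nat \<Rightarrow> nat" where
  "man_even S k = (GREATEST r. r \<le> k \<and> k + r \<le> length S \<and> pal_sub S (k + 1 - r) (k + r))"

text \<open>The Manacher array A[1..2n-1], stored as a list whose j-th element (0-based) is A[j+1].\<close>
definition manacher :: "'a list \<Rightarrow> nat list" where
  "manacher S = map (\<lambda>i. if odd i then man_odd S ((i + 1) div 2) else man_even S (i div 2))
                    [1..<2 * length S]"

text \<open>alpha k: smallest n such that some string of length n has a Manacher array not realized by
  any string with fewer than k distinct symbols. Strings over the alphabet nat (w.l.o.g.).\<close>
definition alpha :: "nat \<Rightarrow> nat" where
  "alpha k = (LEAST n. \<exists>S::nat list. length S = n \<and>
      \<not> (\<exists>T::nat list. card (set T) < k \<and> manacher T = manacher S))"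

end

theory Submission
  imports Defs
begin


definition pl :: "'a list \<Rightarrow> nat \<Rightarrow> nat \<Rightarrow> bool" where
  "pl X j len \<longleftrightarrow> j + len \<le> length X \<and> (\<forall>x. j \<le> x \<longrightarrow> x < j + len \<longrightarrow> X!x = X!(2*j+len-1-x))"

lemma plD: "pl X j len \<Longrightarrow> j \<le> x \<Longrightarrow> x < j + len \<Longrightarrow> X!x = X!(2*j+len-1-x)"
  unfolding pl_def by blast

lemma plI: "j + len \<le> length X \<Longrightarrow> (\<And>x. j \<le> x \<Longrightarrow> x < j + len \<Longrightarrow> X!x = X!(2*j+len-1-x)) \<Longrightarrow> pl X j len"
  unfolding pl_def by blast

lemma plD':
  assumes "pl X j len" "j \<le> x" "x < j + len" "x + y + 1 = 2*j + len"
  shows "X!x = X!y"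
proof -
  have "y = 2*j+len-1-x" using assms(4) by linarith
  then show ?thesis using plD[OF assms(1-3)] by simp
qed

lemma plI':
  assumes "j + len \<le> length X" "\<And>x y. j \<le> x \<Longrightarrow> x < j + len \<Longrightarrow> x + y + 1 = 2*j + len \<Longrightarrow> X!x = X!y"
  shows "pl X j len"
proof (rule plI[OF assms(1)])
  fix x assume "j \<le> x" "x < j + len"
  moreover have "x + (2*j+len-1-x) + 1 = 2*j + len" using calculation by linarith
  ultimately show "X!x = X!(2*j+len-1-x)" using assms(2) by blast
qed

lemma pl_len: "pl X j len \<Longrightarrow> j + len \<le> length X"
  unfolding pl_def by blast

lemma pl_shrink: assumes h: "pl X j len" and d: "2*d \<le> len" shows "pl X (j+d) (len - 2*d)"
proof (rule plI)
  show "j + d + (len - 2 * d) \<le> length X" using pl_len[OF h] d by linarith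
next
  fix x assume x: "j + d \<le> x" "x < j + d + (len - 2 * d)"
  have "X!x = X!(2 * j + len - 1 - x)" by (rule plD[OF h]) (use x d in linarith)+
  moreover have "2 * j + len - 1 - x = 2 * (j + d) + (len - 2 * d) - 1 - x" using d x by auto
  ultimately show "X ! x = X ! (2 * (j + d) + (len - 2 * d) - 1 - x)" by simp
qed

lemma pal_sub_pl:
  assumes "1 \<le> i" "i \<le> j+1" "j \<le> length S"
  shows "pal_sub S i j \<longleftrightarrow> pl S (i-1) (j+1-i)"
proof -
  define w where "w = take (j + 1 - i) (drop (i - 1) S)"
  have lw: "length w = j+1-i" using assms unfolding w_def by auto
  have nw: "\<And>t. t < j+1-i \<Longrightarrow> w!t = S!(i-1+t)" using assms unfolding w_def by auto
  have "pal_sub S i j \<longleftrightarrow> rev w = w" unfolding pal_sub_def w_def Let_def by simp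
  also have "\<dots> \<longleftrightarrow> (\<forall>t<j+1-i. w!t = w!(j+1-i-1-t))"
  proof
    assume "rev w = w"
    show "\<forall>t<j+1-i. w!t = w!(j+1-i-1-t)"
    proof (intro allI impI)
      fix t assume t: "t < j+1-i"
      have "rev w ! t = w ! (length w - Suc t)" using t lw by (simp add: rev_nth)
      then show "w!t = w!(j+1-i-1-t)" using \<open>rev w = w\<close> lw by simp
    qed
  next
    assume h: "\<forall>t<j+1-i. w!t = w!(j+1-i-1-t)"
    show "rev w = w"
    proof (rule nth_equalityI)
      fix t assume t: "t < length (rev w)"
      have tt: "t < j+1-i" using t lw by simp
      have e: "w!t = w!(j+1-i-1-t)" using h tt by blast
      have "rev w ! t = w ! (length w - Suc t)" using t by (simp add: rev_nth)
      also have "length w - Suc t = j+1-i-1-t" using lw by simp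
      finally show "rev w ! t = w ! t" using e by simp
    qed simp
  qed
  also have "\<dots> \<longleftrightarrow> pl S (i-1) (j+1-i)"
  proof
    assume h: "\<forall>t<j+1-i. w!t = w!(j+1-i-1-t)"
    show "pl S (i-1) (j+1-i)" unfolding pl_def
    proof (intro conjI allI impI)
      show "i - 1 + (j + 1 - i) \<le> length S" using assms by auto
    next
      fix x assume x: "i - 1 \<le> x" "x < i - 1 + (j + 1 - i)"
      have "x-(i-1) < j+1-i" using x by linarith
      then have "w!(x-(i-1)) = w!(j+1-i-1-(x-(i-1)))" using h by blast
      moreover have "w!(x-(i-1)) = S!x" using nw[of "x-(i-1)"] x by auto
      moreover have "i-1+(j+1-i-1-(x-(i-1))) = 2 * (i - 1) + (j + 1 - i) - 1 - x"
        using x assms by auto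
      moreover have "w!(j+1-i-1-(x-(i-1))) = S!(i-1+(j+1-i-1-(x-(i-1))))"
        using nw[of "j+1-i-1-(x-(i-1))"] x assms by auto
      ultimately show "S!x = S!(2 * (i - 1) + (j + 1 - i) - 1 - x)" by simp
    qed
  next
    assume h: "pl S (i-1) (j+1-i)"
    show "\<forall>t<j+1-i. w!t = w!(j+1-i-1-t)"
    proof (intro allI impI)
      fix t assume t: "t < j+1-i"
      have "i-1 \<le> i-1+t" "i-1+t < i-1+(j+1-i)" using t by auto
      then have "S!(i-1+t) = S!(2*(i-1)+(j+1-i)-1-(i-1+t))" using h unfolding pl_def by blast
      moreover have "2*(i-1)+(j+1-i)-1-(i-1+t) = i-1+(j+1-i-1-t)" using t assms by auto
      ultimately show "w!t = w!(j+1-i-1-t)" using nw t by auto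
    qed
  qed
  finally show ?thesis .
qed


lemma pl_step:
  "pl X j (len+2) \<longleftrightarrow> j + len + 2 \<le> length X \<and> X!j = X!(j+len+1) \<and> pl X (j+1) len"
proof
  assume h: "pl X j (len+2)"
  have b: "j + len + 2 \<le> length X" using pl_len[OF h] by simp
  have "X!j = X!(2*j+(len+2)-1-j)" by (rule plD[OF h]) auto
  then have 1: "X!j = X!(j+len+1)" by (simp add: algebra_simps)
  have "pl X (j+1) (len+2-2*1)" by (rule pl_shrink[OF h]) simp
  then show "j + len + 2 \<le> length X \<and> X!j = X!(j+len+1) \<and> pl X (j+1) len" using b 1 by simp
next
  assume h: "j + len + 2 \<le> length X \<and> X!j = X!(j+len+1) \<and> pl X (j+1) len"
  then have h1: "X!j = X!(j+len+1)" and h2: "pl X (j+1) len" and b: "j + len + 2 \<le> length X" by auto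
  show "pl X j (len+2)"
  proof (rule plI)
    show "j + (len + 2) \<le> length X" using b by simp
  next
    fix x assume x: "j \<le> x" "x < j + (len+2)"
    show "X ! x = X ! (2 * j + (len + 2) - 1 - x)"
    proof (cases "x = j")
      case True then show ?thesis using h1 by (simp add: algebra_simps)
    next
      case F1: False
      show ?thesis
      proof (cases "x = j+len+1")
        case True then show ?thesis using h1 by (simp add: algebra_simps)
      next
        case False
        then have "j+1 \<le> x" "x < j+1+len" using x F1 by auto
        then have "X!x = X!(2 * (j + 1) + len - 1 - x)" by (rule plD[OF h2])
        moreover have "2 * (j + 1) + len - 1 - x = 2 * j + (len + 2) - 1 - x" by auto
        ultimately show ?thesis by simp
      qed
    qed
  qed
qed

lemma pl_01: "j + len \<le> length X \<Longrightarrow> len \<le> 1 \<Longrightarrow> pl X j len"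
proof -
  assume a: "j + len \<le> length X" "len \<le> 1"
  have "\<forall>x. j \<le> x \<longrightarrow> x < j+len \<longrightarrow> 2*j+len-1-x = x" using a by auto
  then show ?thesis using a unfolding pl_def by auto
qed

lemma pl_append: assumes b: "j + len \<le> length X" shows "pl (X @ Y) j len \<longleftrightarrow> pl X j len"
proof
  assume h: "pl (X @ Y) j len"
  show "pl X j len"
  proof (rule plI[OF b])
    fix x assume x: "j \<le> x" "x < j + len"
    have "(X@Y)!x = (X@Y)!(2*j+len-1-x)" by (rule plD[OF h x])
    moreover have "x < length X" "2*j+len-1-x < length X" using x b by linarith+
    ultimately show "X!x = X!(2*j+len-1-x)" by (simp add: nth_append)
  qed
next
  assume h: "pl X j len"
  show "pl (X @ Y) j len"
  proof (rule plI)
    show "j + len \<le> length (X @ Y)" using b by simp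
  next
    fix x assume x: "j \<le> x" "x < j + len"
    have "X!x = X!(2*j+len-1-x)" by (rule plD[OF h x])
    moreover have "x < length X" "2*j+len-1-x < length X" using x b by linarith+
    ultimately show "(X@Y)!x = (X@Y)!(2*j+len-1-x)" by (simp add: nth_append)
  qed
qed

lemma greatest_down:
  fixes P :: "nat \<Rightarrow> bool"
  assumes bnd: "\<And>r. P r \<Longrightarrow> r \<le> b" and p0: "P 0" and dn: "\<And>r r'. P r \<Longrightarrow> r' \<le> r \<Longrightarrow> P r'"
  shows "r \<le> Greatest P \<longleftrightarrow> P r"
proof
  assume "r \<le> Greatest P"
  moreover have "P (Greatest P)" by (rule GreatestI_nat[where P=P, OF p0]) (use bnd in blast)
  ultimately show "P r" using dn by blast
next
  assume "P r"
  then show "r \<le> Greatest P" by (rule Greatest_le_nat) (use bnd in blast)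
qed

lemma man_odd_iff:
  assumes k: "1 \<le> k" "k \<le> length S"
  shows "r \<le> man_odd S k \<longleftrightarrow> (r+1 \<le> k \<and> k+r \<le> length S \<and> pl S (k-r-1) (2*r+1))"
proof -
  define Q where "Q r \<longleftrightarrow> (r+1 \<le> k \<and> k+r \<le> length S \<and> pl S (k-r-1) (2*r+1))" for r
  have "man_odd S k = Greatest Q"
    unfolding man_odd_def
  proof (rule arg_cong[where f=Greatest], rule ext)
    fix r
    show "(r + 1 \<le> k \<and> k + r \<le> length S \<and> pal_sub S (k - r) (k + r)) = Q r"
    proof (cases "r + 1 \<le> k \<and> k + r \<le> length S")
      case True
      then have "pal_sub S (k - r) (k + r) \<longleftrightarrow> pl S (k-r-1) (k+r+1-(k-r))"
        by (intro pal_sub_pl) auto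
      moreover have "k+r+1-(k-r) = 2*r+1" using True by auto
      ultimately show ?thesis using True unfolding Q_def by (simp add: mult_2)
    next
      case False
      then show ?thesis unfolding Q_def by auto
    qed
  qed
  moreover have "r \<le> Greatest Q \<longleftrightarrow> Q r"
  proof (rule greatest_down)
    show "Q r \<Longrightarrow> r \<le> k" for r unfolding Q_def by auto
    show "Q 0" unfolding Q_def using k by (auto intro: pl_01)
    fix r r' assume q: "Q r" and rr: "r' \<le> r"
    have "pl S (k-r-1+(r-r')) (2*r+1-2*(r-r'))" using q rr unfolding Q_def by (intro pl_shrink) auto
    moreover have "k-r-1+(r-r') = k-r'-1" "2*r+1-2*(r-r') = 2*r'+1" using q rr unfolding Q_def by auto
    ultimately show "Q r'" using q rr unfolding Q_def by auto
  qed
  ultimately show ?thesis unfolding Q_def by simp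
qed

lemma man_even_iff:
  assumes k: "k \<le> length S"
  shows "r \<le> man_even S k \<longleftrightarrow> (r \<le> k \<and> k+r \<le> length S \<and> pl S (k-r) (2*r))"
proof -
  define Q where "Q r \<longleftrightarrow> (r \<le> k \<and> k+r \<le> length S \<and> pl S (k-r) (2*r))" for r
  have "man_even S k = Greatest Q"
    unfolding man_even_def
  proof (rule arg_cong[where f=Greatest], rule ext)
    fix r
    show "(r \<le> k \<and> k + r \<le> length S \<and> pal_sub S (k + 1 - r) (k + r)) = Q r"
    proof (cases "r \<le> k \<and> k + r \<le> length S")
      case True
      then have "pal_sub S (k + 1 - r) (k + r) \<longleftrightarrow> pl S (k+1-r-1) (k+r+1-(k+1-r))"
        by (intro pal_sub_pl) auto
      moreover have "k+r+1-(k+1-r) = 2*r" "k+1-r-1 = k-r" using True by auto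
      ultimately show ?thesis using True unfolding Q_def by (simp add: mult_2)
    next
      case False
      then show ?thesis unfolding Q_def by auto
    qed
  qed
  moreover have "r \<le> Greatest Q \<longleftrightarrow> Q r"
  proof (rule greatest_down)
    show "Q r \<Longrightarrow> r \<le> k" for r unfolding Q_def by auto
    show "Q 0" unfolding Q_def using k by (auto intro: pl_01)
    fix r r' assume q: "Q r" and rr: "r' \<le> r"
    have "pl S (k-r+(r-r')) (2*r-2*(r-r'))" using q rr unfolding Q_def by (intro pl_shrink) auto
    moreover have "k-r+(r-r') = k-r'" "2*r-2*(r-r') = 2*r'" using q rr unfolding Q_def by auto
    ultimately show "Q r'" using q rr unfolding Q_def by auto
  qed
  ultimately show ?thesis unfolding Q_def by simp
qed

lemma length_manacher: "length (manacher S) = 2 * length S - 1"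
  unfolding manacher_def by simp

lemma manacher_nth_odd: "1 \<le> k \<Longrightarrow> k \<le> length S \<Longrightarrow> manacher S ! (2*k-2) = man_odd S k"
proof -
  assume k: "1 \<le> k" "k \<le> length S"
  have e: "Suc ((2*k-2) div 2) = k" using k by auto
  show ?thesis unfolding manacher_def using k e by (simp add: nth_map_upt)
qed

lemma manacher_nth_even: "1 \<le> k \<Longrightarrow> k < length S \<Longrightarrow> manacher S ! (2*k-1) = man_even S k"
proof -
  assume k: "1 \<le> k" "k < length S"
  have "manacher S ! (2*k-1) = (if odd (2*k) then man_odd S ((2*k + 1) div 2) else man_even S ((2*k) div 2))"
    unfolding manacher_def using k by (simp add: nth_map_upt)
  then show ?thesis by simp
qed

lemma eq_by_le: "(\<And>r. r \<le> a \<longleftrightarrow> r \<le> b) \<Longrightarrow> a = (b::nat)"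
  by (metis le_antisym order_refl)

lemma pl_eq_manacher:
  assumes l: "length S = length T" and p: "\<And>j len. pl S j len \<longleftrightarrow> pl T j len"
  shows "manacher S = manacher T"
  unfolding manacher_def l
proof (rule map_cong[OF refl])
  fix i assume i: "i \<in> set [1..<2 * length T]"
  show "(if odd i then man_odd S ((i + 1) div 2) else man_even S (i div 2)) =
        (if odd i then man_odd T ((i + 1) div 2) else man_even T (i div 2))"
  proof (cases "odd i")
    case True
    define k where "k = (i+1) div 2"
    have k: "1 \<le> k" "k \<le> length T" using i True unfolding k_def by auto
    have "man_odd S k = man_odd T k"
    proof (rule eq_by_le)
      fix r
      show "r \<le> man_odd S k \<longleftrightarrow> r \<le> man_odd T k"
        using man_odd_iff[of k S r] man_odd_iff[of k T r] k l p by simp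
    qed
    then show ?thesis using True unfolding k_def by simp
  next
    case False
    define k where "k = i div 2"
    have k: "k \<le> length T" using i False unfolding k_def by auto
    have "man_even S k = man_even T k"
    proof (rule eq_by_le)
      fix r
      show "r \<le> man_even S k \<longleftrightarrow> r \<le> man_even T k"
        using man_even_iff[of k S r] man_even_iff[of k T r] k l p by simp
    qed
    then show ?thesis using False unfolding k_def by simp
  qed
qed

lemma manacher_eq_pl:
  assumes m: "manacher S = manacher T"
  shows "length S = length T \<and> (\<forall>j len. pl S j len \<longleftrightarrow> pl T j len)"
proof -
  have "2 * length S - 1 = 2 * length T - 1" using arg_cong[OF m, of length] by (simp add: length_manacher)
  then have l: "length S = length T" by arith
  have "pl S j len \<longleftrightarrow> pl T j len" for j len
  proof (cases "j + len \<le> length S")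
    case False
    then show ?thesis using pl_len[of S j len] pl_len[of T j len] l by auto
  next
    case b: True
    obtain r where "len = 2*r+1 \<or> len = 2*r" by (metis oddE evenE)
    then show ?thesis
    proof
      assume len: "len = 2*r+1"
      define k where "k = j+r+1"
      have k: "1 \<le> k" "k \<le> length S" "r+1 \<le> k" "k+r \<le> length S" "k-r-1 = j"
        using b len unfolding k_def by auto
      have "pl S j len \<longleftrightarrow> r \<le> man_odd S k" using man_odd_iff[of k S r] k len by simp
      moreover have "pl T j len \<longleftrightarrow> r \<le> man_odd T k" using man_odd_iff[of k T r] k len l by simp
      moreover have "man_odd S k = man_odd T k"
        using manacher_nth_odd[of k S] manacher_nth_odd[of k T] k l m by simp
      ultimately show ?thesis by simp
    next
      assume len: "len = 2*r"
      show ?thesis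
      proof (cases "r = 0")
        case True
        then show ?thesis using pl_01[of j len S] pl_01[of j len T] b l len by simp
      next
        case False
        define k where "k = j+r"
        have k: "1 \<le> k" "k < length S" "r \<le> k" "k+r \<le> length S" "k-r = j"
          using b len False unfolding k_def by auto
        have "pl S j len \<longleftrightarrow> r \<le> man_even S k" using man_even_iff[of k S r] k len by simp
        moreover have "pl T j len \<longleftrightarrow> r \<le> man_even T k" using man_even_iff[of k T r] k len l by simp
        moreover have "man_even S k = man_even T k"
          using manacher_nth_even[of k S] manacher_nth_even[of k T] k l m by simp
        ultimately show ?thesis by simp
      qed
    qed
  qed
  then show ?thesis using l by blast
qed



definition v2 :: "nat \<Rightarrow> nat" where "v2 x = (GREATEST e. 2^e dvd x)"

lemma v2_eq:
  assumes "0 < x" "2^e dvd x" "\<not> 2^(Suc e) dvd x"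
  shows "v2 x = e"
  unfolding v2_def
proof (rule Greatest_equality)
  show "2^e dvd x" by fact
  fix y assume y: "2^y dvd (x::nat)"
  show "y \<le> e"
  proof (rule ccontr)
    assume "\<not> y \<le> e"
    then have "(2::nat)^(Suc e) dvd 2^y" by (intro le_imp_power_dvd) auto
    then show False using y assms(3) dvd_trans by blast
  qed
qed

lemma v2_odd: "odd u \<Longrightarrow> v2 (2^e * u) = e"
proof (rule v2_eq)
  assume u: "odd u"
  then show "0 < 2^e * u" by (auto intro: odd_pos)
  show "2^e dvd 2^e * u" by simp
  show "\<not> 2 ^ Suc e dvd 2 ^ e * u"
  proof
    assume "2 ^ Suc e dvd 2 ^ e * u"
    then have "2^e * 2 dvd 2^e * u" by (simp add: mult.commute)
    then have "2 dvd u" by (subst (asm) nat_mult_dvd_cancel1) auto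
    then show False using u by simp
  qed
qed

lemma v2_props: "0 < x \<Longrightarrow> 2^(v2 x) dvd x \<and> \<not> 2^(Suc (v2 x)) dvd x"
proof -
  assume x: "0 < x"
  have bnd: "\<And>y. 2^y dvd x \<Longrightarrow> y \<le> x"
  proof -
    fix y assume "2^y dvd x"
    then have "2^y \<le> x" using x by (intro dvd_imp_le) auto
    then show "y \<le> x" using less_exp[of y] by linarith
  qed
  have 1: "2^(v2 x) dvd x" unfolding v2_def
    by (rule GreatestI_nat[where P="\<lambda>e. 2^e dvd x" and k=0]) (use bnd in auto)
  have 2: "\<not> 2^(Suc (v2 x)) dvd x"
  proof
    assume "2^(Suc (v2 x)) dvd x"
    then have "Suc (v2 x) \<le> v2 x" unfolding v2_def
      by (rule Greatest_le_nat[where P="\<lambda>e. 2^e dvd x"]) (use bnd in auto)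
    then show False by simp
  qed
  show ?thesis using 1 2 by blast
qed

lemma v2_same:
  assumes x: "0 < x" and y: "0 < y" and d: "2^j dvd (x+y)" and nd: "\<not> 2^j dvd x"
  shows "v2 y = v2 x"
proof -
  define e where "e = v2 x"
  have e1: "2^e dvd x" and e2: "\<not> 2^(Suc e) dvd x" using v2_props[OF x] unfolding e_def by auto
  have ej: "e < j"
  proof (rule ccontr)
    assume "\<not> e < j"
    then have "(2::nat)^j dvd 2^e" by (intro le_imp_power_dvd) auto
    then show False using e1 nd dvd_trans by blast
  qed
  have "(2::nat)^e dvd 2^j" by (intro le_imp_power_dvd) (use ej in auto)
  then have "2^e dvd x + y" using d dvd_trans by blast
  then have y1: "2^e dvd y" using e1 by (simp add: dvd_add_right_iff)
  have "(2::nat)^(Suc e) dvd 2^j" by (intro le_imp_power_dvd) (use ej in auto)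
  then have s: "2^(Suc e) dvd x + y" using d dvd_trans by blast
  have y2: "\<not> 2^(Suc e) dvd y"
  proof
    assume "2^(Suc e) dvd y"
    then have "2^(Suc e) dvd x" using s by (simp add: dvd_add_left_iff)
    then show False using e2 by simp
  qed
  show ?thesis using v2_eq[OF y y1 y2] unfolding e_def by simp
qed

lemma not_dvd_between:
  assumes "(d::nat) * q < x" "x < d * (q+1)"
  shows "\<not> d dvd x"
proof
  assume "d dvd x"
  then obtain c where c: "x = d * c" by blast
  have 1: "d * q < d * c" "d * c < d * (q+1)" using assms c by auto
  have "q < c" using 1(1) by (metis mult_less_cancel1)
  moreover have "c < q + 1" using 1(2) by (metis mult_less_cancel1)
  ultimately show False by simp
qed

definition rf :: "nat \<Rightarrow> nat" where "rf x = (if x = 0 then 0 else Suc (v2 x))"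
definition rs :: "nat \<Rightarrow> nat list" where "rs n = map rf [0..<n]"

lemma rs_nth: "x < n \<Longrightarrow> rs n ! x = rf x"
  unfolding rs_def by simp

lemma length_rs: "length (rs n) = n" unfolding rs_def by simp

lemma odd_pow_minus1: "0 < d \<Longrightarrow> odd ((2::nat)^d - 1)"
  by (simp add: even_diff_nat)

lemma rf_N: "rf (2^m) = Suc m"
  unfolding rf_def using v2_odd[of 1 m] by simp

lemma rf_B: assumes "j < m" shows "rf (2^m - 2^j) = Suc j"
proof -
  obtain d where m: "m = j + d" and d: "0 < d" using assms by (metis less_imp_add_positive)
  have "(2::nat)^m - 2^j = 2^j * (2^d - 1)" by (simp add: m power_add diff_mult_distrib2)
  moreover have "(2::nat)^1 \<le> 2^d" using d by (intro power_increasing) auto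
  then have "(0::nat) < 2^j * (2^d - 1)" by simp
  ultimately show ?thesis unfolding rf_def using v2_odd[OF odd_pow_minus1[OF d], of j] by simp
qed

lemma rf_Bi: assumes "i < j" "j \<le> m" shows "rf (2^m - 2^j + 2^i) = Suc i"
proof -
  obtain d where m: "m = j + d" using assms by (metis le_add_diff_inverse)
  obtain e where j: "j = i + e" and e: "0 < e" using assms by (metis less_imp_add_positive)
  have eq: "(2::nat)^m - 2^j + 2^i = 2^i * (2^e * (2^d - 1) + 1)"
    by (simp add: m j power_add diff_mult_distrib2 algebra_simps)
  have od: "odd ((2::nat)^e * (2^d - 1) + 1)" using e by simp
  have "rf (2^m - 2^j + 2^i) = rf (2^i * (2^e * (2^d - 1) + 1))" by (simp only: eq)
  also have "\<dots> = Suc i" unfolding rf_def using v2_odd[OF od, of i] by simp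
  finally show ?thesis .
qed

lemma rs_pal:
  assumes ij: "i \<le> j" and jm: "j \<le> m" and n: "2^m < n"
  shows "pl (rs n) (2^m - 2^j + 1) (2^i - 1)"
proof -
  obtain d where m: "m = j + d" using jm by (metis le_add_diff_inverse)
  obtain e where j: "j = i + e" using ij by (metis le_add_diff_inverse)
  define q :: nat where "q = 2^e * (2^d - 1)"
  define B :: nat where "B = 2^m - 2^j"
  have Bq: "B = 2^i * q" unfolding B_def q_def by (simp add: m j power_add diff_mult_distrib2 algebra_simps)
  have Bm: "B + 2^j = 2^m" unfolding B_def m by (simp add: power_add)
  have ij2: "(2::nat)^i \<le> 2^j" using ij by (simp add: power_increasing)
  have i1: "(1::nat) \<le> 2^i" by simp
  show ?thesis unfolding B_def[symmetric]
  proof (rule plI)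
    have "B + 2^i \<le> n" using Bm ij2 n by linarith
    then show "B + 1 + (2 ^ i - 1) \<le> length (rs n)" using i1 by (simp add: length_rs)
  next
    fix x assume x: "B + 1 \<le> x" "x < B + 1 + (2 ^ i - 1)"
    define y where "y = 2 * (B + 1) + (2 ^ i - 1) - 1 - x"
    have y: "y = 2*B + 2^i - x" "B + 1 \<le> y" "y < B + 2^i" "x < B + 2^i" unfolding y_def using x i1 by auto
    have xn: "x < n" "y < n" using y Bm ij2 n by linarith+
    have xy0: "0 < x" "0 < y" using x y by auto
    have dv: "2^i dvd x + y"
    proof -
      have "x + y = 2^i * (2*q+1)" using y x Bq by (simp add: algebra_simps)
      then show ?thesis by simp
    qed
    have nd: "\<not> 2^i dvd x"
      by (rule not_dvd_between[where q=q]) (use x y Bq in \<open>auto simp: algebra_simps\<close>)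
    have "v2 y = v2 x" by (rule v2_same[OF xy0 dv nd])
    then show "rs n ! x = rs n ! (2 * (B + 1) + (2 ^ i - 1) - 1 - x)"
      using xn xy0 unfolding y_def[symmetric] by (simp add: rs_nth rf_def)
  qed
qed

lemma neq_transfer:
  assumes P: "\<And>j len. pl S j len \<longleftrightarrow> pl T j len" and l: "length S = length T"
    and p: "pl S (a+1) len" and ne: "S!a \<noteq> S!(a+len+1)" and b: "a+len+2 \<le> length S"
  shows "T!a \<noteq> T!(a+len+1)"
proof
  assume e: "T!a = T!(a+len+1)"
  have q: "pl T (a+1) len" using p P by blast
  have "pl T a (len+2)" unfolding pl_step using q e b l by simp
  then have "pl S a (len+2)" using P by blast
  then have "S!a = S!(a+len+1)" unfolding pl_step by blast
  then show False using ne by blast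
qed

lemma arith_aux:
  fixes a b N :: nat
  assumes "1 \<le> a" "a < b" "b \<le> N"
  shows "2*(N-b+1)+(b-1)-1-(N-a) = N-b+(a-1)+1"
proof -
  obtain c where c: "N = b + c" using assms(3) by (metis le_add_diff_inverse)
  obtain d where d: "b = a + d + 1" using assms(2) by (metis add.commute add_Suc less_imp_Suc_add plus_1_eq_Suc)
  obtain e where e: "a = e + 1" using assms(1) by (metis add.commute le_add_diff_inverse)
  show ?thesis unfolding c d e by simp
qed

lemma lower:
  assumes n: "2^m < n" and M: "manacher T = manacher (rs n)"
  shows "m + 2 \<le> card (set T)"
proof -
  define S where "S = rs n"
  define N :: nat where "N = 2^m"
  have lS: "length S = n" unfolding S_def by (simp add: length_rs)
  have PP: "length T = length S \<and> (\<forall>j len. pl T j len \<longleftrightarrow> pl S j len)"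
    using manacher_eq_pl[OF M] unfolding S_def .
  then have l: "length S = length T" and P: "\<And>j len. pl S j len \<longleftrightarrow> pl T j len" by auto
  have pw: "\<And>j. j \<le> m \<Longrightarrow> (2::nat)^j \<le> N" unfolding N_def by (simp add: power_increasing)
  have pal: "\<And>i j. i \<le> j \<Longrightarrow> j \<le> m \<Longrightarrow> pl S (N - 2^j + 1) (2^i - 1)"
    unfolding S_def N_def using n by (intro rs_pal) auto
  have SN: "S!N = Suc m" unfolding S_def N_def using n by (simp add: rs_nth rf_N)
  have SB: "\<And>j. j \<le> m \<Longrightarrow> S!(N - 2^j) = (if j = m then 0 else Suc j)"
  proof -
    fix j assume j: "j \<le> m"
    have "N - 2^j < n" using n unfolding N_def by linarith
    then have "S!(N-2^j) = rf (N - 2^j)" unfolding S_def by (simp add: rs_nth)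
    then show "S!(N - 2^j) = (if j = m then 0 else Suc j)"
      using j rf_B[of j m] unfolding N_def by (auto simp: rf_def)
  qed
  have A: "\<And>j. j \<le> m \<Longrightarrow> T!(N - 2^j) \<noteq> T!N"
  proof -
    fix j assume j: "j \<le> m"
    have "(1::nat) \<le> 2^j" by simp
    then have e1: "N - 2^j + (2^j - 1) + 1 = N" using pw[OF j] by linarith
    have e2: "N - 2^j + 1 = N - 2^j + 1" ..
    have "T!(N - 2^j) \<noteq> T!(N - 2^j + (2^j - 1) + 1)"
    proof (rule neq_transfer[OF P l])
      show "pl S (N - 2 ^ j + 1) (2 ^ j - 1)" using pal[OF le_refl j] .
      show "S ! (N - 2 ^ j) \<noteq> S ! (N - 2 ^ j + (2 ^ j - 1) + 1)" unfolding e1 using SN SB[OF j] by simp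
      show "N - 2 ^ j + (2 ^ j - 1) + 2 \<le> length S" using e1 lS n unfolding N_def by simp
    qed
    then show "T!(N - 2^j) \<noteq> T!N" using e1 by simp
  qed
  have B: "\<And>i j. i < j \<Longrightarrow> j \<le> m \<Longrightarrow> T!(N - 2^i) \<noteq> T!(N - 2^j)"
  proof -
    fix i j assume ij: "i < j" and j: "j \<le> m"
    have p2: "(2::nat)^i < 2^j" using ij by (simp add: power_strict_increasing)
    have p1: "(1::nat) \<le> 2^i" by simp
    have Nj: "2^j \<le> N" using pw[OF j] .
    have plT: "pl T (N - 2^j + 1) (2^j - 1)" using pal[OF le_refl j] P by blast
    have "T!(N - 2^i) = T!(2 * (N - 2^j + 1) + (2^j - 1) - 1 - (N - 2^i))"
      by (rule plD[OF plT]) (use p1 p2 Nj in linarith)+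
    moreover have "2 * (N - 2^j + 1) + (2^j - 1) - 1 - (N - 2^i) = N - 2^j + (2^i - 1) + 1"
      using arith_aux[OF p1 p2 Nj] .
    ultimately have 1: "T!(N - 2^i) = T!(N - 2^j + (2^i - 1) + 1)" by simp
    have e3: "N - 2^j + (2^i - 1) + 1 = 2^m - 2^j + 2^i" using p1 p2 Nj unfolding N_def by linarith
    have "T!(N - 2^j) \<noteq> T!(N - 2^j + (2^i - 1) + 1)"
    proof (rule neq_transfer[OF P l])
      show "pl S (N - 2 ^ j + 1) (2 ^ i - 1)" using pal ij j by simp
      have "N - 2^j + (2^i - 1) + 1 < n" using p1 p2 Nj n unfolding N_def by linarith
      then have "S ! (N - 2 ^ j + (2 ^ i - 1) + 1) = Suc i"
        unfolding S_def using e3 rf_Bi[OF ij j] by (simp add: rs_nth)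
      then show "S ! (N - 2 ^ j) \<noteq> S ! (N - 2 ^ j + (2 ^ i - 1) + 1)" using SB[OF j] ij by simp
      show "N - 2 ^ j + (2 ^ i - 1) + 2 \<le> length S" using p1 p2 Nj n lS unfolding N_def by linarith
    qed
    then show "T!(N - 2^i) \<noteq> T!(N - 2^j)" using 1 by simp
  qed
  define g where "g j = (if j = Suc m then N else N - 2^j)" for j :: nat
  have inj: "inj_on (\<lambda>j. T!(g j)) {..Suc m}"
  proof (rule inj_onI)
    fix a b assume a: "a \<in> {..Suc m}" and b: "b \<in> {..Suc m}" and e: "T!(g a) = T!(g b)"
    show "a = b"
    proof (rule ccontr)
      assume ab: "a \<noteq> b"
      show False
      proof (cases "a = Suc m \<or> b = Suc m")
        case True
        then show False using A[of b] A[of a] a b ab e unfolding g_def by (auto split: if_splits)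
      next
        case False
        then have am: "a \<le> m" "b \<le> m" using a b by auto
        then show False using B[of a b] B[of b a] ab e False unfolding g_def
          by (cases "a < b") auto
      qed
    qed
  qed
  have sub: "(\<lambda>j. T!(g j)) ` {..Suc m} \<subseteq> set T"
  proof
    fix y assume "y \<in> (\<lambda>j. T!(g j)) ` {..Suc m}"
    then obtain j where y: "y = T!(g j)" by blast
    have "g j \<le> N" unfolding g_def by auto
    then have "g j < length T" using l lS n unfolding N_def by linarith
    then show "y \<in> set T" using y by simp
  qed
  have "card ((\<lambda>j. T!(g j)) ` {..Suc m}) = m + 2" using card_image[OF inj] by simp
  then show ?thesis using card_mono[OF _ sub] by simp
qed



lemma plD2:
  assumes "pl X j len" "j \<le> x" "x < j + len" "x + y + 1 = j + j + len"
  shows "X!x = X!y"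
  using plD'[OF assms(1-3)] assms(4) by (simp add: mult_2)

lemma plI2:
  assumes "j + len \<le> length X" "\<And>x y. j \<le> x \<Longrightarrow> x < j + len \<Longrightarrow> x + y + 1 = j + j + len \<Longrightarrow> X!x = X!y"
  shows "pl X j len"
  using plI'[OF assms(1)] assms(2) by (simp add: mult_2)

lemma pl_mirror:
  assumes big: "pl X s L" and sp: "s \<le> p" and pl': "p + l \<le> s + L" and small: "pl X p l"
    and q: "q + p + l = 2*s + L"
  shows "pl X q l"
proof (rule plI')
  show "q + l \<le> length X" using pl_len[OF big] sp pl' q by arith
next
  fix x y assume x: "q \<le> x" "x < q + l" and xy: "x + y + 1 = 2*q + l"
  define x' where "x' = 2*s+L-1-x"
  have x': "x + x' + 1 = 2*s + L" using x sp pl' q unfolding x'_def by arith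
  define y' where "y' = 2*p+l-1-x'"
  have y': "x' + y' + 1 = 2*p + l" using x x' sp pl' q unfolding y'_def by arith
  have "X!x = X!x'" by (rule plD'[OF big _ _ x']) (use x sp pl' q in arith)+
  also have "\<dots> = X!y'" by (rule plD'[OF small _ _ y']) (use x x' sp pl' q in arith)+
  also have "\<dots> = X!y" by (rule plD'[OF big]) (use x x' y' xy sp pl' q in arith)+
  finally show "X!x = X!y" .
qed

definition Pset :: "'a list \<Rightarrow> nat \<Rightarrow> nat set" where
  "Pset S i = {a. a < i \<and> pl S (a+1) (i-1-a)}"

lemma PsetD: "a \<in> Pset S i \<Longrightarrow> a < i \<and> pl S (a+1) (i-1-a)"
  unfolding Pset_def by blast

lemma key_lt:
  assumes IH: "\<And>j len. j + len \<le> i \<Longrightarrow> pl S j len \<longleftrightarrow> pl T j len"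
    and iS: "i \<le> length S" and lT: "length T = i"
    and a: "a \<in> Pset S i" and b: "b \<in> Pset S i" and ab: "a < b"
  shows "S!a = S!b \<longleftrightarrow> T!a = T!b"
proof -
  have ai: "a < i" and longS: "pl S (a+1) (i-1-a)" using PsetD[OF a] by auto
  have bi: "b < i" and shortS: "pl S (b+1) (i-1-b)" using PsetD[OF b] by auto
  define m where "m = a + i - b"
  have m: "b + m = a + i" unfolding m_def using bi by arith
  have longT: "pl T (a+1) (i-1-a)" using IH[of "a+1" "i-1-a"] longS ai by simp
  have SbM: "S!b = S!m" by (rule plD'[OF longS]) (use ab ai bi m in arith)+
  have TbM: "T!b = T!m" by (rule plD'[OF longT]) (use ab ai bi m in arith)+
  have innerS: "pl S (a+1) (i-1-b)"
    by (rule pl_mirror[OF longS _ _ shortS]) (use ab bi in arith)+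
  have innerT: "pl T (a+1) (i-1-b)" using IH[of "a+1" "i-1-b"] innerS ab bi by simp
  have e1: "a + (i-1-b) + 1 = m" using m ab bi by arith
  have e2: "a + (i-1-b) + 2 \<le> i" using m ab bi by arith
  have "pl S a (i-1-b+2) \<longleftrightarrow> pl T a (i-1-b+2)" using IH[of a "i-1-b+2"] e2 by simp
  moreover have "pl S a (i-1-b+2) \<longleftrightarrow> S!a = S!m"
    using pl_step[of S a "i-1-b"] e1 e2 iS innerS by simp
  moreover have "pl T a (i-1-b+2) \<longleftrightarrow> T!a = T!m"
    using pl_step[of T a "i-1-b"] e1 e2 lT innerT by simp
  ultimately show ?thesis using SbM TbM by simp
qed

lemma key:
  assumes IH: "\<And>j len. j + len \<le> i \<Longrightarrow> pl S j len \<longleftrightarrow> pl T j len"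
    and iS: "i \<le> length S" and lT: "length T = i"
    and a: "a \<in> Pset S i" and b: "b \<in> Pset S i"
  shows "S!a = S!b \<longleftrightarrow> T!a = T!b"
proof (cases a b rule: linorder_cases)
  case less
  then show ?thesis using key_lt[OF IH iS lT a b] by blast
next
  case equal
  then show ?thesis by simp
next
  case greater
  then show ?thesis using key_lt[OF IH iS lT b a] by (metis)
qed

definition step :: "'a list \<Rightarrow> nat list \<Rightarrow> nat \<Rightarrow> nat" where
  "step S T i = (if {a \<in> Pset S i. S!a = S!i} \<noteq> {} then T ! (SOME a. a \<in> {a \<in> Pset S i. S!a = S!i})
     else if set T - (\<lambda>a. T!a) ` Pset S i \<noteq> {} then (SOME x. x \<in> set T - (\<lambda>a. T!a) ` Pset S i)
     else (SOME x. x \<notin> set T))"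

lemma Pset_sub: "Pset S i \<subseteq> {..<i}" unfolding Pset_def by auto

lemma finite_Pset: "finite (Pset S i)" using Pset_sub finite_subset by blast

lemma step_prop:
  assumes IH: "\<And>j len. j + len \<le> i \<Longrightarrow> pl S j len \<longleftrightarrow> pl T j len"
    and iS: "i < length S" and lT: "length T = i"
  shows "\<forall>a\<in>Pset S i. (S!a = S!i \<longleftrightarrow> T!a = step S T i)"
    and "card (insert (step S T i) (set T)) \<le> max (card (set T)) (card ((\<lambda>a. T!a) ` Pset S i) + 1)"
proof -
  have iS': "i \<le> length S" using iS by simp
  define E where "E = {a \<in> Pset S i. S!a = S!i}"
  define U where "U = (\<lambda>a. T!a) ` Pset S i"
  have US: "U \<subseteq> set T"
  proof
    fix z assume "z \<in> U"
    then obtain a where a: "a \<in> Pset S i" "z = T!a" unfolding U_def by blast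
    then have "a < length T" using Pset_sub lT by blast
    then show "z \<in> set T" using a by simp
  qed
  have fU: "finite U" unfolding U_def using finite_Pset by blast
  have "(\<forall>a\<in>Pset S i. (S!a = S!i \<longleftrightarrow> T!a = step S T i)) \<and>
    card (insert (step S T i) (set T)) \<le> max (card (set T)) (card U + 1)"
  proof (cases "E \<noteq> {}")
    case True
    define a0 where "a0 = (SOME a. a \<in> E)"
    have a0: "a0 \<in> E" unfolding a0_def using True some_in_eq by blast
    have st: "step S T i = T!a0" unfolding step_def a0_def E_def[symmetric] using True by simp
    have a0P: "a0 \<in> Pset S i" and a0S: "S!a0 = S!i" using a0 unfolding E_def by auto
    have 1: "\<forall>a\<in>Pset S i. (S!a = S!i \<longleftrightarrow> T!a = step S T i)"
    proof
      fix a assume aP: "a \<in> Pset S i"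
      have "S!a = S!a0 \<longleftrightarrow> T!a = T!a0" using key[OF IH iS' lT aP a0P] .
      then show "S!a = S!i \<longleftrightarrow> T!a = step S T i" using st a0S by simp
    qed
    have "a0 < i" using a0P Pset_sub by auto
    then have "step S T i \<in> set T" using st lT by simp
    then have "insert (step S T i) (set T) = set T" by blast
    then show ?thesis using 1 by simp
  next
    case False
    then have E0: "E = {}" by simp
    have notin: "step S T i \<notin> U \<and> card (insert (step S T i) (set T)) \<le> max (card (set T)) (card U + 1)"
    proof (cases "set T - U \<noteq> {}")
      case True
      have st: "step S T i = (SOME x. x \<in> set T - U)"
        unfolding step_def U_def[symmetric] E_def[symmetric] using E0 True by simp
      have "step S T i \<in> set T - U" unfolding st using True some_in_eq by blast
      then have "step S T i \<notin> U" "insert (step S T i) (set T) = set T" by auto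
      then show ?thesis by simp
    next
      case False
      have st: "step S T i = (SOME x. x \<notin> set T)"
        unfolding step_def U_def[symmetric] E_def[symmetric] using E0 False by simp
      have "\<exists>x::nat. x \<notin> set T" using ex_new_if_finite[OF infinite_UNIV_nat, of "set T"] by blast
      then have n: "step S T i \<notin> set T" unfolding st by (rule someI_ex)
      have "set T \<subseteq> U" using False by blast
      then have "card (set T) \<le> card U" using fU by (rule card_mono[rotated])
      moreover have "card (insert (step S T i) (set T)) = card (set T) + 1" using n by simp
      ultimately show ?thesis using n US by auto
    qed
    have "\<forall>a\<in>Pset S i. (S!a = S!i \<longleftrightarrow> T!a = step S T i)"
    proof
      fix a assume aP: "a \<in> Pset S i"
      have "S!a \<noteq> S!i" using E0 aP unfolding E_def by blast
      moreover have "T!a \<in> U" using aP unfolding U_def by blast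
      then have "T!a \<noteq> step S T i" using notin by metis
      ultimately show "S!a = S!i \<longleftrightarrow> T!a = step S T i" by simp
    qed
    then show ?thesis using notin by simp
  qed
  then show "\<forall>a\<in>Pset S i. (S!a = S!i \<longleftrightarrow> T!a = step S T i)"
    and "card (insert (step S T i) (set T)) \<le> max (card (set T)) (card ((\<lambda>a. T!a) ` Pset S i) + 1)"
    unfolding U_def by auto
qed

lemma card_image_transfer:
  assumes fA: "finite A" and h: "\<And>a b. a \<in> A \<Longrightarrow> b \<in> A \<Longrightarrow> f a = f b \<Longrightarrow> g a = g b"
  shows "card (g ` A) \<le> card (f ` A)"
proof -
  define k where "k y = g (SOME a. a \<in> A \<and> f a = y)" for y
  have "g ` A = k ` (f ` A)"
  proof
    show "g ` A \<subseteq> k ` (f ` A)"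
    proof
      fix z assume "z \<in> g ` A"
      then obtain a where a: "a \<in> A" "z = g a" by blast
      have "\<exists>b. b \<in> A \<and> f b = f a" using a by blast
      then have s: "(SOME b. b \<in> A \<and> f b = f a) \<in> A \<and> f (SOME b. b \<in> A \<and> f b = f a) = f a"
        by (rule someI_ex)
      have "k (f a) = g a" unfolding k_def using h[OF _ a(1)] s by blast
      then show "z \<in> k ` (f ` A)" using a by force
    qed
  next
    show "k ` (f ` A) \<subseteq> g ` A"
    proof
      fix z assume "z \<in> k ` (f ` A)"
      then obtain a where a: "a \<in> A" "z = k (f a)" by blast
      have "\<exists>b. b \<in> A \<and> f b = f a" using a by blast
      then have s: "(SOME b. b \<in> A \<and> f b = f a) \<in> A \<and> f (SOME b. b \<in> A \<and> f b = f a) = f a"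
        by (rule someI_ex)
      then show "z \<in> g ` A" unfolding a(2) k_def by blast
    qed
  qed
  then show ?thesis using card_image_le[of "f ` A" k] fA by simp
qed

lemma F2:
  assumes iS: "i \<le> length S" and a: "a \<in> Pset S i" and b: "b \<in> Pset S i" and ba: "b < a"
    and q: "i-1-b \<le> 2*(i-1-a)"
  shows "S!a = S!(2*a-b) \<and> (2*a-b) \<in> Pset S i \<and> a < 2*a-b"
proof -
  have ai: "a < i" and u0: "pl S (a+1) (i-1-a)" using PsetD[OF a] by auto
  have bi: "b < i" and v0: "pl S (b+1) (i-1-b)" using PsetD[OF b] by auto
  define p where "p = i-1-a"
  define r where "r = i-1-b"
  have pe: "a + p + 1 = i" unfolding p_def using ai by simp
  have re: "b + r + 1 = i" unfolding r_def using bi by simp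
  have u: "pl S (a+1) p" using u0 unfolding p_def .
  have v: "pl S (b+1) r" using v0 unfolding r_def .
  have q2: "r \<le> 2*p" using q unfolding p_def r_def .
  define c where "c = 2*a-b"
  have c: "c + b = 2*a" unfolding c_def using ba by simp
  define y where "y = b+i-a"
  have y: "y + a = b + i" unfolding y_def using ai by simp
  have "S!a = S!y" by (rule plD2[OF v]) (use ba pe re y in linarith)+
  also have "\<dots> = S!c" by (rule plD2[OF u]) (use ba pe re y c q2 in linarith)+
  finally have 1: "S!a = S!c" .
  have ci: "c < i" "a < c" using c q2 ba pe re by arith+
  define s where "s = i-1-c"
  have se: "c + s + 1 = i" unfolding s_def using ci by simp
  have "pl S (c+1) s"
  proof (rule plI2)
    show "c + 1 + s \<le> length S" using se iS by arith
  next
    fix x y' assume x: "c + 1 \<le> x" "x < c + 1 + s" and xy: "x + y' + 1 = c + 1 + (c + 1) + s"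
    define z where "z = a+i-x"
    have z: "x + z = a + i" unfolding z_def using x se by simp
    define w where "w = b+i-z"
    have w: "z + w = b + i" unfolding w_def using z x se c ba by simp
    have "S!x = S!z" by (rule plD2[OF u]) (use x z se c pe ci in linarith)+
    also have "\<dots> = S!w" by (rule plD2[OF v]) (use x z w se c ba re pe ci in linarith)+
    also have "\<dots> = S!y'" by (rule plD2[OF u]) (use x xy z w se c ba pe re ci in linarith)+
    finally show "S!x = S!y'" .
  qed
  then have "c \<in> Pset S i" unfolding Pset_def s_def using ci by simp
  then show ?thesis using 1 ci unfolding c_def by simp
qed

lemma sparse_card:
  fixes X :: "nat set"
  shows "finite X \<Longrightarrow> X \<subseteq> {..<N} \<Longrightarrow> N < 2^k \<Longrightarrow> (\<forall>x\<in>X. \<forall>y\<in>X. x < y \<longrightarrow> 2*x < y) \<Longrightarrow> card X \<le> k"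
proof (induction k arbitrary: X N)
  case 0
  then show ?case by auto
next
  case (Suc k)
  show ?case
  proof (cases "X = {}")
    case True then show ?thesis by simp
  next
    case False
    define M where "M = Max X"
    have MX: "M \<in> X" unfolding M_def using Suc.prems(1) False by simp
    have MN: "M < N" using MX Suc.prems(2) by auto
    define X' where "X' = X - {M}"
    have "X' \<subseteq> {..<N div 2}"
    proof
      fix x assume x: "x \<in> X'"
      then have "x \<in> X" "x \<noteq> M" unfolding X'_def by auto
      moreover have "x \<le> M" unfolding M_def using Suc.prems(1) calculation by simp
      ultimately have "2*x < M" using Suc.prems(4) MX by auto
      then have "x < N div 2" using MN by presburger
      then show "x \<in> {..<N div 2}" by simp
    qed
    moreover have "N div 2 < 2^k" using Suc.prems(3) by simp
    moreover have "finite X'" unfolding X'_def using Suc.prems(1) by simp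
    moreover have "\<forall>x\<in>X'. \<forall>y\<in>X'. x < y \<longrightarrow> 2*x < y" using Suc.prems(4) unfolding X'_def by blast
    ultimately have "card X' \<le> k" using Suc.IH by blast
    moreover have "card X = card X' + 1"
    proof -
      have "card X' = card X - 1" unfolding X'_def using MX Suc.prems(1) by simp
      moreover have "0 < card X" using MX Suc.prems(1) card_gt_0_iff by blast
      ultimately show ?thesis by simp
    qed
    ultimately show ?thesis by simp
  qed
qed

lemma comb:
  assumes iS: "i \<le> length S" and ik: "i < 2^k"
  shows "card ((\<lambda>a. S!a) ` Pset S i) \<le> k"
proof -
  define P where "P = Pset S i"
  define Ps where "Ps = {a \<in> P. \<not> (\<exists>b\<in>P. b < a \<and> i-1-b \<le> 2*(i-1-a))}"
  have claim: "\<forall>a. a \<in> P \<longrightarrow> i - a = t \<longrightarrow> (\<exists>a'\<in>Ps. S!a = S!a')" for t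
  proof (induction t rule: less_induct)
    case (less t)
    show ?case
    proof (intro allI impI)
      fix a assume aP: "a \<in> P" and t: "i - a = t"
      show "\<exists>a'\<in>Ps. S!a = S!a'"
      proof (cases "a \<in> Ps")
        case True then show ?thesis by blast
      next
        case False
        then obtain b where b: "b \<in> P" "b < a" "i-1-b \<le> 2*(i-1-a)" unfolding Ps_def using aP by blast
        have f: "S!a = S!(2*a-b) \<and> (2*a-b) \<in> P \<and> a < 2*a-b"
          using F2[OF iS _ _ b(2) b(3)] aP b(1) unfolding P_def by blast
        have "2*a-b < i" using f unfolding P_def Pset_def by blast
        then have "i - (2*a-b) < t" using f t by arith
        then have "\<exists>a'\<in>Ps. S!(2*a-b) = S!a'" using less.IH f by blast
        then show ?thesis using f by simp
      qed
    qed
  qed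
  have sub: "(\<lambda>a. S!a) ` P \<subseteq> (\<lambda>a. S!a) ` Ps"
  proof
    fix z assume "z \<in> (\<lambda>a. S!a) ` P"
    then obtain a where "a \<in> P" "z = S!a" by blast
    then show "z \<in> (\<lambda>a. S!a) ` Ps" using claim[of "i-a"] by blast
  qed
  have fP: "finite P" unfolding P_def by (rule finite_Pset)
  have PsP: "Ps \<subseteq> P" unfolding Ps_def by blast
  then have fPs: "finite Ps" using fP finite_subset by blast
  define l where "l a = i - 1 - a" for a
  have Pi: "\<And>a. a \<in> P \<Longrightarrow> a < i" unfolding P_def Pset_def by blast
  have inj: "inj_on l Ps"
  proof (rule inj_onI)
    fix a b assume ab: "a \<in> Ps" "b \<in> Ps" "l a = l b"
    then have "a < i" "b < i" using Pi PsP by auto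
    then show "a = b" using ab(3) unfolding l_def by arith
  qed
  have "card (l ` Ps) \<le> k"
  proof (rule sparse_card)
    show "finite (l ` Ps)" using fPs by simp
    show "l ` Ps \<subseteq> {..<i}"
    proof
      fix z assume "z \<in> l ` Ps"
      then obtain a where a: "a \<in> Ps" "z = l a" by blast
      then have "a < i" using Pi PsP by blast
      then show "z \<in> {..<i}" using a unfolding l_def by simp
    qed
    show "i < 2^k" by fact
    show "\<forall>x\<in>l ` Ps. \<forall>y\<in>l ` Ps. x < y \<longrightarrow> 2 * x < y"
    proof (intro ballI impI)
      fix x y assume x: "x \<in> l ` Ps" and y: "y \<in> l ` Ps" and xy: "x < y"
      obtain a where a: "a \<in> Ps" "x = l a" using x by blast
      obtain b where b: "b \<in> Ps" "y = l b" using y by blast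
      have ai: "a < i" "b < i" using a b Pi PsP by auto
      have ba: "b < a" using xy a b ai unfolding l_def by arith
      have "\<not> (i-1-b \<le> 2*(i-1-a))" using a(1) b(1) ba PsP unfolding Ps_def by blast
      then show "2 * x < y" using a b unfolding l_def by arith
    qed
  qed
  then have "card Ps \<le> k" using card_image[OF inj] by simp
  moreover have "card ((\<lambda>a. S!a) ` P) \<le> card ((\<lambda>a. S!a) ` Ps)"
    by (rule card_mono) (use fPs sub in auto)
  moreover have "card ((\<lambda>a. S!a) ` Ps) \<le> card Ps" by (rule card_image_le[OF fPs])
  ultimately show ?thesis unfolding P_def by simp
qed

primrec build :: "'a list \<Rightarrow> nat \<Rightarrow> nat list" where
  "build S 0 = []"
| "build S (Suc i) = build S i @ [step S (build S i) i]"

lemma length_build: "length (build S i) = i"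
  by (induction i) auto

lemma build_inv:
  "i \<le> length S \<Longrightarrow> (\<forall>j len. j + len \<le> i \<longrightarrow> (pl S j len \<longleftrightarrow> pl (build S i) j len))
     \<and> (\<forall>k. i \<le> 2^k \<longrightarrow> card (set (build S i)) \<le> k + 1)"
proof (induction i)
  case 0
  have "\<forall>j len. j + len \<le> 0 \<longrightarrow> (pl S j len \<longleftrightarrow> pl (build S 0) j len)"
  proof (intro allI impI)
    fix j len :: nat assume "j + len \<le> 0"
    then have "j = 0" "len = 0" by auto
    then show "pl S j len \<longleftrightarrow> pl (build S 0) j len" using pl_01[of 0 0 S] pl_01[of 0 0 "[]::nat list"] by simp
  qed
  then show ?case by simp
next
  case (Suc i)
  define T where "T = build S i"
  define c where "c = step S T i"
  have iS: "i < length S" using Suc.prems by simp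
  have lT: "length T = i" unfolding T_def by (rule length_build)
  have IH1: "\<And>j len. j + len \<le> i \<Longrightarrow> pl S j len \<longleftrightarrow> pl T j len"
    using Suc.IH iS unfolding T_def by simp
  have IH2: "\<And>k. i \<le> 2^k \<Longrightarrow> card (set T) \<le> k + 1"
    using Suc.IH iS unfolding T_def by simp
  have bS: "build S (Suc i) = T @ [c]" unfolding T_def c_def by simp
  note sp = step_prop[OF IH1 iS lT]
  have part1: "\<forall>j len. j + len \<le> Suc i \<longrightarrow> (pl S j len \<longleftrightarrow> pl (T @ [c]) j len)"
  proof (intro allI impI)
    fix j len assume jl: "j + len \<le> Suc i"
    show "pl S j len \<longleftrightarrow> pl (T @ [c]) j len"
    proof (cases "j + len \<le> i")
      case True
      then show ?thesis using IH1[OF True] pl_append[of j len T "[c]"] lT by simp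
    next
      case False
      then have jl': "j + len = Suc i" using jl by simp
      show ?thesis
      proof (cases "len \<le> 1")
        case True
        then show ?thesis using pl_01[of j len S] pl_01[of j len "T @ [c]"] jl' iS lT by simp
      next
        case False
        define l where "l = len - 2"
        have l: "len = l + 2" using False unfolding l_def by simp
        have jli: "j + l + 1 = i" using jl' l by simp
        have inS: "pl S (j+1) l \<longleftrightarrow> pl T (j+1) l" using IH1[of "j+1" l] jli by simp
        have inT: "pl (T @ [c]) (j+1) l \<longleftrightarrow> pl T (j+1) l" using pl_append[of "j+1" l T "[c]"] jli lT by simp
        have stS: "pl S j (l+2) \<longleftrightarrow> S!j = S!i \<and> pl S (j+1) l"
          using pl_step[of S j l] jli iS by simp
        have stT: "pl (T @ [c]) j (l+2) \<longleftrightarrow> (T @ [c])!j = (T @ [c])!i \<and> pl (T @ [c]) (j+1) l"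
          using pl_step[of "T @ [c]" j l] jli lT by simp
        have nj: "(T @ [c])!j = T!j" "(T @ [c])!i = c" using jli lT by (simp_all add: nth_append)
        show ?thesis
        proof (cases "pl S (j+1) l")
          case False
          then show ?thesis using stS stT inS inT l by simp
        next
          case True
          have "j \<in> Pset S i" unfolding Pset_def using True jli
            by (simp add: \<open>j + l + 1 = i\<close>[symmetric])
          then have "S!j = S!i \<longleftrightarrow> T!j = c" using sp(1) unfolding c_def by blast
          then show ?thesis using stS stT inS inT l nj True by simp
        qed
      qed
    qed
  qed
  have part2: "\<forall>k. Suc i \<le> 2^k \<longrightarrow> card (set (T @ [c])) \<le> k + 1"
  proof (intro allI impI)
    fix k assume k: "Suc i \<le> 2^k"
    have 1: "card (set T) \<le> k + 1" using IH2 k by simp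
    have "card ((\<lambda>a. T!a) ` Pset S i) \<le> card ((\<lambda>a. S!a) ` Pset S i)"
    proof (rule card_image_transfer[OF finite_Pset])
      fix a b assume ab: "a \<in> Pset S i" "b \<in> Pset S i" "S!a = S!b"
      have iS': "i \<le> length S" using iS by simp
      show "T!a = T!b" using key[OF IH1 iS' lT ab(1) ab(2)] ab(3) by simp
    qed
    also have "\<dots> \<le> k" using comb[of i S k] iS k by simp
    finally have 2: "card ((\<lambda>a. T!a) ` Pset S i) \<le> k" .
    have "card (set (T @ [c])) = card (insert c (set T))" by simp
    also have "\<dots> \<le> max (card (set T)) (card ((\<lambda>a. T!a) ` Pset S i) + 1)" using sp(2) unfolding c_def .
    finally show "card (set (T @ [c])) \<le> k + 1" using 1 2 by simp
  qed
  show ?case unfolding bS using part1 part2 by blast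
qed

theorem upper:
  fixes S :: "'a list"
  assumes "length S \<le> 2^k"
  shows "\<exists>T::nat list. manacher T = manacher S \<and> card (set T) \<le> k + 1"
proof -
  define T where "T = build S (length S)"
  have inv: "(\<forall>j len. j + len \<le> length S \<longrightarrow> (pl S j len \<longleftrightarrow> pl T j len))
     \<and> (\<forall>k. length S \<le> 2^k \<longrightarrow> card (set T) \<le> k + 1)" unfolding T_def by (rule build_inv) simp
  have lT: "length T = length S" unfolding T_def by (rule length_build)
  have "pl S j len \<longleftrightarrow> pl T j len" for j len
  proof (cases "j + len \<le> length S")
    case True then show ?thesis using inv by blast
  next
    case False then show ?thesis using pl_len[of S j len] pl_len[of T j len] lT by auto
  qed
  then have "manacher S = manacher T" using pl_eq_manacher[of S T] lT by simp
  then show ?thesis using inv assms by auto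
qed



lemma alpha1: "alpha 1 = 1"
  unfolding alpha_def
proof (rule Least_equality)
  show "\<exists>S::nat list. length S = 1 \<and> \<not> (\<exists>T::nat list. card (set T) < 1 \<and> manacher T = manacher S)"
  proof (intro exI conjI)
    show "length [0::nat] = 1" by simp
    show "\<not> (\<exists>T::nat list. card (set T) < 1 \<and> manacher T = manacher [0::nat])"
    proof
      assume "\<exists>T::nat list. card (set T) < 1 \<and> manacher T = manacher [0::nat]"
      then obtain T :: "nat list" where T: "card (set T) < 1" "manacher T = manacher [0::nat]" by blast
      then have "T = []" by (simp add: card_eq_0_iff)
      have "length (manacher T) = 1" using T(2) length_manacher[of "[0::nat]"] by simp
      moreover have "length (manacher T) = 0" using \<open>T = []\<close> length_manacher[of T] by simp
      ultimately show False by simp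
    qed
  qed
next
  fix y assume "\<exists>S::nat list. length S = y \<and> \<not> (\<exists>T::nat list. card (set T) < 1 \<and> manacher T = manacher S)"
  then obtain S :: "nat list" where S: "length S = y" "\<not> (\<exists>T::nat list. card (set T) < 1 \<and> manacher T = manacher S)" by blast
  show "1 \<le> y"
  proof (rule ccontr)
    assume "\<not> 1 \<le> y"
    then have "length S = 0" using S(1) by simp
    then have "S = []" by simp
    then show False using S(2) by auto
  qed
qed

lemma alphak: assumes k: "2 \<le> k" shows "alpha k = 2^(k-2) + 1"
  unfolding alpha_def
proof (rule Least_equality)
  define m where "m = k - 2"
  have km: "k = m + 2" unfolding m_def using k by simp
  show "\<exists>S::nat list. length S = 2^(k-2)+1 \<and> \<not> (\<exists>T::nat list. card (set T) < k \<and> manacher T = manacher S)"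
  proof (intro exI conjI)
    show "length (rs (2^(k-2)+1)) = 2^(k-2)+1" by (simp add: length_rs)
    show "\<not> (\<exists>T::nat list. card (set T) < k \<and> manacher T = manacher (rs (2^(k-2)+1)))"
    proof
      assume "\<exists>T::nat list. card (set T) < k \<and> manacher T = manacher (rs (2^(k-2)+1))"
      then obtain T :: "nat list" where T: "card (set T) < k" "manacher T = manacher (rs (2^m+1))"
        unfolding m_def by blast
      have "m + 2 \<le> card (set T)" by (rule lower[OF _ T(2)]) simp
      then show False using T(1) km by simp
    qed
  qed
next
  fix y assume "\<exists>S::nat list. length S = y \<and> \<not> (\<exists>T::nat list. card (set T) < k \<and> manacher T = manacher S)"
  then obtain S :: "nat list" where S: "length S = y" "\<not> (\<exists>T::nat list. card (set T) < k \<and> manacher T = manacher S)" by blast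
  show "2^(k-2)+1 \<le> y"
  proof (rule ccontr)
    assume "\<not> 2^(k-2)+1 \<le> y"
    then have "length S \<le> 2^(k-2)" using S(1) by simp
    then obtain T :: "nat list" where T: "manacher T = manacher S" "card (set T) \<le> (k-2) + 1"
      using upper by blast
    then have "card (set T) < k" using k by simp
    then show False using S(2) T(1) by blast
  qed
qed

lemma log_part:
  fixes n :: nat
  assumes n: "2 \<le> n"
  shows "(\<forall>S::nat list. length S = n \<longrightarrow>
            (\<exists>T::nat list. manacher T = manacher S \<and>
               int (card (set T)) \<le> \<lfloor>log 2 (real (n - 1))\<rfloor> + 2))
       \<and> (\<exists>S::nat list. length S = n \<and>
            (\<forall>T::nat list. manacher T = manacher S \<longrightarrow>
               int (card (set T)) \<ge> \<lfloor>log 2 (real (n - 1))\<rfloor> + 2))"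
proof -
  have lg0: "0 \<le> log 2 (real (n - 1))" using n by simp
  define m where "m = nat \<lfloor>log 2 (real (n - 1))\<rfloor>"
  have fm: "\<lfloor>log 2 (real (n - 1))\<rfloor> = int m" unfolding m_def using lg0 by simp
  have "2^m \<le> n - 1 \<and> n - 1 < 2^(m+1)"
    using floor_log_nat_eq_powr_iff[of 2 "n-1" m] fm n by simp
  then have b1: "2^m < n" and b2: "n \<le> 2^(m+1)" by auto
  show ?thesis
  proof (intro conjI allI impI)
    fix S :: "nat list" assume "length S = n"
    then obtain T :: "nat list" where T: "manacher T = manacher S" "card (set T) \<le> (m+1) + 1"
      using upper[of S "m+1"] b2 by auto
    then show "\<exists>T::nat list. manacher T = manacher S \<and> int (card (set T)) \<le> \<lfloor>log 2 (real (n - 1))\<rfloor> + 2"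
      unfolding fm by (intro exI[of _ T]) simp
  next
    show "\<exists>S::nat list. length S = n \<and> (\<forall>T::nat list. manacher T = manacher S \<longrightarrow>
               int (card (set T)) \<ge> \<lfloor>log 2 (real (n - 1))\<rfloor> + 2)"
    proof (intro exI[of _ "rs n"] conjI allI impI)
      show "length (rs n) = n" by (simp add: length_rs)
      fix T :: "nat list" assume "manacher T = manacher (rs n)"
      then have "m + 2 \<le> card (set T)" by (rule lower[OF b1])
      then show "int (card (set T)) \<ge> \<lfloor>log 2 (real (n - 1))\<rfloor> + 2" unfolding fm by simp
    qed
  qed
qed

theorem corollary5p2:
  shows "alpha 1 = 1 \<and> (\<forall>k\<ge>2. alpha k = 2 ^ (k - 2) + 1)
    \<and> (\<forall>n::nat\<ge>2.
         (\<forall>S::nat list. length S = n \<longrightarrow>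
            (\<exists>T::nat list. manacher T = manacher S \<and>
               int (card (set T)) \<le> \<lfloor>log 2 (real (n - 1))\<rfloor> + 2))
       \<and> (\<exists>S::nat list. length S = n \<and>
            (\<forall>T::nat list. manacher T = manacher S \<longrightarrow>
               int (card (set T)) \<ge> \<lfloor>log 2 (real (n - 1))\<rfloor> + 2)))"
  using alpha1 alphak log_part by blast

end
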